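(* Let $N=1$ (a single qubit, so the qubit string is omitted and we write $\mathbf{T}^{(k)}_{\mu}(\vec n)$). Let $k\ge 3$, let $\vec n=(n_1,\dots,n_k)$ be a window string with $L\ge n_1\ge\cdots\ge n_k\ge 1$, and let $\mu=(\mu_1,\dots,\mu_{k-1})\in\{0,1\}^{k-1}$. Suppose $\vec n$ contains a "3-streak", i.e. there is an index $i$ with $2\le i\le k-1$ and $n_{i-1}=n_i=n_{i+1}$. Let $\vec n'$ be the length-$(k-2)$ string obtained from $\vec n$ by deleting the entries $n_{i-1}$ and $n_i$, and let $\mu'\in\{0,1\}^{k-3}$ be obtained from $\mu$ by deleting its $(i-1)$-th and $i$-th entries. Then there is a scalar $c$, depending only on $k$, $i$ and $\mu$ (and not on the unitaries $U_1,\dots,U_L$ nor on $\tilde O$), such that $$\mathbf{T}^{(k)}_{\mu}(\vec n)=c\,\mathbf{T}^{(k-2)}_{\mu'}(\vec n').$$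
   Context: Fix integers $L\ge 1$ and $N\ge 1$, and a set $Q$ of $N$ qubit labels. For $q\in Q$ let $\sigma_z^{[q]}$ denote the Pauli-$Z$ operator acting on qubit $q$ tensored with the identity on all other qubits of $(\mathbb{C}^2)^{\otimes N}$. (Digital control) Let $U_1,\dots,U_L$ be arbitrary unitaries on $(\mathbb{C}^2)^{\otimes N}$ ($U_n$ is the control propagator, constant on the $n$-th time window), and let $\tilde O$ be an arbitrary Hermitian unitary operator on $(\mathbb{C}^2)^{\otimes N}$ (the toggling-frame observable). For $q\in Q$ and $n\in\{1,\dots,L\}$ define $\tilde h_q(n)=U_n^\dagger\sigma_z^{[q]}U_n$ and $\bar h_q(n)=-\tilde O^{-1}\tilde h_q(n)\tilde O$. For $k\ge1$, a window string $\vec n=(n_1,\dots,n_k)$ with $L\ge n_1\ge\cdots\ge n_k\ge1$, a qubit string $\vec q=(q_1,\dots,q_k)\in Q^k$ and a sign string $\mu\in\{0,1\}^{k-1}$, the (window-framed) control tensor is $$\mathbf{T}^{(k)}_{\vec q;\mu}(\vec n)=\sum_{b\in\{0,1\}^k}(-1)^{\sum_{j=1}^{k-1}\mu_j b_{j+1}}\Big(\prod^{\downarrow}_{i:\,b_i=1}\bar h_{q_i}(n_i)\Big)\Big(\prod^{\uparrow}_{i:\,b_i=0}\tilde h_{q_i}(n_i)\Big),$$ where $\prod^{\downarrow}$ is the ordered product with the index $i$ decreasing from left to right, $\prod^{\uparrow}$ is the ordered product with $i$ increasing from left to right, and an empty product is the identity. When $N=1$ the qubit string is omitted and we write $\mathbf{T}^{(k)}_{\mu}(\vec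 n)$. *)

theory Defs
  imports "HOL-Analysis.Analysis"
begin

type_synonym qmat = "complex^2^2"

definition adj :: "qmat \<Rightarrow> qmat" where
  "adj A = (\<chi> i j. cnj (A $ j $ i))"

definition unitary2 :: "qmat \<Rightarrow> bool" where
  "unitary2 A \<longleftrightarrow> adj A ** A = mat 1 \<and> A ** adj A = mat 1"

definition hermitian2 :: "qmat \<Rightarrow> bool" where
  "hermitian2 A \<longleftrightarrow> adj A = A"

definition sigz :: qmat where
  "sigz = (\<chi> i j. if i = j then (if i = 0 then 1 else -1) else 0)"

definition msc :: "complex \<Rightarrow> qmat \<Rightarrow> qmat" where
  "msc c M = (\<chi> i j. c * M $ i $ j)"

definition mprod :: "qmat list \<Rightarrow> qmat" where
  "mprod xs = foldr (**) xs (mat 1)"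

definition htil :: "(nat \<Rightarrow> qmat) \<Rightarrow> nat \<Rightarrow> qmat" where
  "htil U n = adj (U n) ** sigz ** U n"

definition hbar :: "(nat \<Rightarrow> qmat) \<Rightarrow> qmat \<Rightarrow> nat \<Rightarrow> qmat" where
  "hbar U Ot n = - (matrix_inv Ot ** htil U n ** Ot)"

text \<open>Window-framed control tensor T^{(k)}_mu(ns), k = length ns; lists are 0-indexed,
  so ns!j = n_{j+1}, mu!j = mu_{j+1}, bs!j = b_{j+1}.\<close>
definition ctrl_tensor :: "(nat \<Rightarrow> qmat) \<Rightarrow> qmat \<Rightarrow> bool list \<Rightarrow> nat list \<Rightarrow> qmat" where
  "ctrl_tensor U Ot mu ns =
     (\<Sum>bs\<in>{bs::bool list. length bs = length ns}.
        msc ((-1) ^ (\<Sum>j<length ns - 1. of_bool (mu ! j \<and> bs ! (j+1))))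
          (mprod (rev [hbar U Ot (ns ! j). j \<leftarrow> [0..<length ns], bs ! j])
           ** mprod [htil U (ns ! j). j \<leftarrow> [0..<length ns], \<not> bs ! j]))"

definition window_string :: "nat \<Rightarrow> nat list \<Rightarrow> bool" where
  "window_string L ns \<longleftrightarrow> (\<forall>x\<in>set ns. 1 \<le> x \<and> x \<le> L) \<and>
     (\<forall>j. Suc j < length ns \<longrightarrow> ns ! Suc j \<le> ns ! j)"

text \<open>Delete the (i-1)-th and i-th entries (1-indexed) of a list.\<close>
definition del2 :: "nat \<Rightarrow> 'a list \<Rightarrow> 'a list" where
  "del2 i xs = take (i - 2) xs @ drop i xs"

end

theory Submission
  imports Defs
begin

lemma msc_mult_left[simp]: "msc c X ** Y = msc c (X ** Y)"
  by (simp add: msc_def matrix_matrix_mult_def vec_eq_iff sum_distrib_left mult.assoc)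
lemma msc_mult_right[simp]: "X ** msc c Y = msc c (X ** Y)"
  by (simp add: msc_def matrix_matrix_mult_def vec_eq_iff sum_distrib_left mult.left_commute)
lemma msc_add: "msc c (X + Y) = msc c X + msc c Y"
  by (simp add: msc_def vec_eq_iff distrib_left)
lemma msc_addc: "msc (c + d) X = msc c X + msc d X"
  by (simp add: msc_def vec_eq_iff distrib_right)
lemma msc_msc[simp]: "msc c (msc d X) = msc (c*d) X"
  by (simp add: msc_def vec_eq_iff mult.assoc)
lemma msc_one[simp]: "msc 1 X = X"
  by (simp add: msc_def vec_eq_iff)
lemma matrix_add_rdistrib': "((B + C) ** A) = (B ** A) + (C ** A)"
  by (vector matrix_matrix_mult_def sum.distrib[symmetric] field_simps)

lemma mprod_Nil[simp]: "mprod [] = mat 1" by (simp add: mprod_def)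
lemma mprod_Cons[simp]: "mprod (x#xs) = x ** mprod xs" by (simp add: mprod_def)
lemma mprod_append[simp]: "mprod (xs @ ys) = mprod xs ** mprod ys"
  by (induction xs) (auto simp: matrix_mul_assoc)

lemma sum_mmult_right: "(\<Sum>x\<in>S. f x) ** (A::qmat) = (\<Sum>x\<in>S. f x ** A)"
  by (induction S rule: infinite_finite_induct) (auto simp: matrix_add_rdistrib')
lemma sum_mmult_left: "(A::qmat) ** (\<Sum>x\<in>S. f x) = (\<Sum>x\<in>S. A ** f x)"
  by (induction S rule: infinite_finite_induct) (auto simp: matrix_add_ldistrib)
lemma msc_sum: "msc c (\<Sum>x\<in>S. f x) = (\<Sum>x\<in>S. msc c (f x))"
  by (induction S rule: infinite_finite_induct) (auto simp: msc_add msc_def vec_eq_iff distrib_left)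

fun tg :: "(nat \<Rightarrow> bool) \<Rightarrow> (nat \<Rightarrow> qmat) \<Rightarrow> (nat \<Rightarrow> qmat) \<Rightarrow> nat \<Rightarrow> qmat" where
  "tg e A B 0 = mat 1"
| "tg e A B (Suc n) = tg e A B n ** A n + msc (if e n then -1 else 1) (B n ** tg e A B n)"

lemma finite_bl: "finite {bs::bool list. length bs = n}"
  using finite_lists_length_eq[of "UNIV::bool set" n] by simp

lemma compr_app: "length bs = n \<Longrightarrow> [f j. j \<leftarrow> [0..<n], P ((bs@[b])!j)] = [f j. j \<leftarrow> [0..<n], P (bs!j)]"
  by (intro arg_cong[where f=concat] map_cong) (auto simp: nth_append)

lemma sum_app: "length bs = n \<Longrightarrow> (\<Sum>j<n. g j ((bs@[b])!j)) = (\<Sum>j<n. g j (bs!j))"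
  by (intro sum.cong) (auto simp: nth_append)

lemma bl_Suc: "{bs::bool list. length bs = Suc n} = (\<lambda>(bs,b). bs@[b]) ` ({bs. length bs = n} \<times> UNIV)"
proof -
  have "\<And>xs::bool list. length xs = Suc n \<Longrightarrow> \<exists>bs b. xs = bs @ [b] \<and> length bs = n"
    by (metis length_Suc_conv_rev)
  then show ?thesis by (auto simp: image_iff) blast
qed

lemma inj_bl: "inj_on (\<lambda>(bs,b::bool). bs@[b]) X"
  by (auto simp: inj_on_def)

lemma sum_bool: "(\<Sum>y\<in>(UNIV::bool set). f y) = f False + f True"
  by (simp add: UNIV_bool)

lemma step_elem:
  assumes "length bs = n"
  shows "msc ((-1) ^ (\<Sum>j<Suc n. of_bool (e j \<and> (bs@[b])!j)))
     (mprod (rev [B j. j \<leftarrow> [0..<Suc n], (bs@[b])!j]) ** mprod [A j. j \<leftarrow> [0..<Suc n], \<not> (bs@[b])!j])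
   = (if b then msc (if e n then -1 else 1) (B n ** msc ((-1) ^ (\<Sum>j<n. of_bool (e j \<and> bs!j)))
     (mprod (rev [B j. j \<leftarrow> [0..<n], bs!j]) ** mprod [A j. j \<leftarrow> [0..<n], \<not> bs!j]))
     else msc ((-1) ^ (\<Sum>j<n. of_bool (e j \<and> bs!j)))
     (mprod (rev [B j. j \<leftarrow> [0..<n], bs!j]) ** mprod [A j. j \<leftarrow> [0..<n], \<not> bs!j]) ** A n)"
proof -
  have l1: "[B j. j \<leftarrow> [0..<Suc n], (bs@[b])!j] = [B j. j \<leftarrow> [0..<n], bs!j] @ (if b then [B n] else [])"
    using assms by (simp add: nth_append) (intro arg_cong[where f=concat] map_cong; simp)
  have l2: "[A j. j \<leftarrow> [0..<Suc n], \<not>(bs@[b])!j] = [A j. j \<leftarrow> [0..<n], \<not>bs!j] @ (if b then [] else [A n])"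
    using assms by (simp add: nth_append) (intro arg_cong[where f=concat] map_cong; simp)
  have l3: "(\<Sum>j<Suc n. of_bool (e j \<and> (bs@[b])!j)) = (\<Sum>j<n. of_bool (e j \<and> bs!j)) + (of_bool (e n \<and> b)::nat)"
  proof -
    have l3a: "(\<Sum>j<n. of_bool (e j \<and> (bs@[b])!j)) = (\<Sum>j<n. of_bool (e j \<and> bs!j)::nat)"
      using assms by (intro sum.cong) (auto simp: nth_append)
    have l3b: "(bs@[b])!n = b" using assms by (simp add: nth_append)
    show ?thesis by (simp only: sum.lessThan_Suc l3a l3b)
  qed
  show ?thesis
    unfolding l1 l2 l3
    by (cases b; cases "e n") (simp_all add: matrix_mul_assoc power_add)
qed

lemma tg_sum: "tg e A B n = (\<Sum>bs\<in>{bs::bool list. length bs = n}.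
   msc ((-1) ^ (\<Sum>j<n. of_bool (e j \<and> bs!j)))
     (mprod (rev [B j. j \<leftarrow> [0..<n], bs!j]) ** mprod [A j. j \<leftarrow> [0..<n], \<not> bs!j]))"
proof (induction n)
  case 0
  then show ?case by simp
next
  case (Suc n)
  let ?F = "\<lambda>bs. msc ((-1) ^ (\<Sum>j<n. of_bool (e j \<and> bs!j)))
     (mprod (rev [B j. j \<leftarrow> [0..<n], bs!j]) ** mprod [A j. j \<leftarrow> [0..<n], \<not> bs!j])"
  have "(\<Sum>bs\<in>{bs::bool list. length bs = Suc n}.
   msc ((-1) ^ (\<Sum>j<Suc n. of_bool (e j \<and> bs!j)))
     (mprod (rev [B j. j \<leftarrow> [0..<Suc n], bs!j]) ** mprod [A j. j \<leftarrow> [0..<Suc n], \<not> bs!j]))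
    = (\<Sum>p\<in>{bs::bool list. length bs = n} \<times> UNIV. 
   msc ((-1) ^ (\<Sum>j<Suc n. of_bool (e j \<and> (fst p @ [snd p])!j)))
     (mprod (rev [B j. j \<leftarrow> [0..<Suc n], (fst p @ [snd p])!j]) ** mprod [A j. j \<leftarrow> [0..<Suc n], \<not> (fst p @ [snd p])!j]))"
    unfolding bl_Suc by (subst sum.reindex[OF inj_bl]) (simp add: case_prod_beta)
  also have "\<dots> = (\<Sum>bs\<in>{bs::bool list. length bs = n}. ?F bs ** A n + msc (if e n then -1 else 1) (B n ** ?F bs))"
    unfolding sum.cartesian_product'
    apply (rule sum.cong, simp)
    apply (simp only: sum_bool fst_conv snd_conv step_elem mem_Collect_eq if_True if_False)
    done
  also have "\<dots> = tg e A B (Suc n)"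
    by (simp add: Suc sum.distrib sum_mmult_right sum_mmult_left msc_sum)
  finally show ?case by simp
qed

definition sgn2 :: "bool \<Rightarrow> complex" where "sgn2 e = (if e then -1 else 1)"

lemma three:
  fixes X A B :: qmat
  assumes AA: "A ** A = mat 1" and BB: "B ** B = mat 1"
  shows "let X1 = X ** A + msc (sgn2 ea) (B ** X); X2 = X1 ** A + msc (sgn2 eb) (B ** X1);
    X3 = X2 ** A + msc (sgn2 eg) (B ** X2) in
    X3 = msc (1 + sgn2 ea * sgn2 eb + sgn2 ea * sgn2 eg + sgn2 eb * sgn2 eg) (X ** A + msc (sgn2 ea) (B ** X))"
proof -
  have BBY: "B ** (B ** Y) = Y" for Y using BB by (simp add: matrix_mul_assoc)
  have XAA: "Y ** (A ** A) = Y" for Y using AA by simp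
  show ?thesis
    apply (simp only: Let_def matrix_add_ldistrib matrix_add_rdistrib' msc_add msc_mult_left msc_mult_right
       matrix_mul_assoc[symmetric] XAA BBY msc_msc)
    by (cases ea; cases eb; cases eg)
      (simp_all add: sgn2_def vec_eq_iff msc_def algebra_simps)
qed

lemma tg_Suc': "tg e A B (Suc n) = tg e A B n ** A n + msc (sgn2 (e n)) (B n ** tg e A B n)"
  by (simp add: sgn2_def)

declare tg.simps(2)[simp del]

lemma tg_cong: "(\<And>j. j < n \<Longrightarrow> E j = E' j \<and> A j = A' j \<and> B j = B' j) \<Longrightarrow> tg E A B n = tg E' A' B' n"
  by (induction n) (auto simp: tg_Suc')

lemma ct_tg: "ctrl_tensor U Ot mu ns = tg (\<lambda>j. 0 < j \<and> mu!(j-1)) (\<lambda>j. htil U (ns!j)) (\<lambda>j. hbar U Ot (ns!j)) (length ns)"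
proof -
  have ex: "(\<Sum>j<length ns - 1. of_bool (mu ! j \<and> bs ! (j+1))) = (\<Sum>j<length ns. of_bool ((0 < j \<and> mu!(j-1)) \<and> bs!j)::nat)" for bs
  proof (cases "length ns")
    case 0 then show ?thesis by simp
  next
    case (Suc m)
    show ?thesis unfolding Suc by (simp only: sum.lessThan_Suc_shift) simp
  qed
  show ?thesis unfolding ctrl_tensor_def tg_sum ex ..
qed

lemma sigz_sq: "sigz ** sigz = mat 1"
  by (simp add: sigz_def matrix_matrix_mult_def mat_def vec_eq_iff sum_2 forall_2)

lemma htil_sq: assumes "unitary2 (U n)" shows "htil U n ** htil U n = mat 1"
proof -
  have VV: "U n ** (adj (U n) ** Y) = Y" for Y using assms
    by (simp add: unitary2_def matrix_mul_assoc)
  have "htil U n ** htil U n = adj (U n) ** (sigz ** (U n ** (adj (U n) ** (sigz ** U n))))"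
    by (simp add: htil_def matrix_mul_assoc)
  also have "\<dots> = adj (U n) ** U n" by (simp only: VV) (simp add: matrix_mul_assoc sigz_sq)
  also have "\<dots> = mat 1" using assms by (simp add: unitary2_def)
  finally show ?thesis .
qed

lemma mneg_left: "(- X) ** (Y::qmat) = - (X ** Y)"
  by (simp add: matrix_matrix_mult_def vec_eq_iff sum_negf)
lemma mneg_right: "X ** (- Y::qmat) = - (X ** Y)"
  by (simp add: matrix_matrix_mult_def vec_eq_iff sum_negf)

lemma hbar_sq: assumes "unitary2 (U n)" "unitary2 Ot" shows "hbar U Ot n ** hbar U Ot n = mat 1"
proof -
  have "\<exists>A'. Ot ** A' = mat 1 \<and> A' ** Ot = mat 1" using assms(2) unfolding unitary2_def by blast
  then have inv: "Ot ** matrix_inv Ot = mat 1" "matrix_inv Ot ** Ot = mat 1"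
    unfolding matrix_inv_def by (metis (mono_tags, lifting) someI_ex)+
  have OY: "Ot ** (matrix_inv Ot ** Y) = Y" for Y using inv by (simp add: matrix_mul_assoc)
  have "hbar U Ot n ** hbar U Ot n = matrix_inv Ot ** (htil U n ** (Ot ** (matrix_inv Ot ** (htil U n ** Ot))))"
    by (simp add: hbar_def mneg_left mneg_right matrix_mul_assoc)
  also have "\<dots> = matrix_inv Ot ** Ot" by (simp only: OY) (simp add: matrix_mul_assoc htil_sq[of U n, OF assms(1)])
  also have "\<dots> = mat 1" using inv by simp
  finally show ?thesis .
qed

lemma del2_nth_lo: "i \<ge> 2 \<Longrightarrow> i \<le> length xs \<Longrightarrow> j < i - 2 \<Longrightarrow> del2 i xs ! j = xs ! j"
  by (simp add: del2_def nth_append)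
lemma del2_nth_hi: "i \<ge> 2 \<Longrightarrow> i \<le> length xs \<Longrightarrow> i - 2 \<le> j \<Longrightarrow> j < length xs - 2 \<Longrightarrow> del2 i xs ! j = xs ! (j+2)"
  by (auto simp: del2_def nth_append min_def)
lemma del2_length: "i \<ge> 2 \<Longrightarrow> i \<le> length xs \<Longrightarrow> length (del2 i xs) = length xs - 2"
  by (simp add: del2_def min_def)

theorem proposition1:
  fixes k i :: nat and mu :: "bool list"
  assumes "3 \<le> k" and "2 \<le> i" and "i \<le> k - 1" and "length mu = k - 1"
  shows "\<exists>c::complex. \<forall>(L::nat) (U::nat \<Rightarrow> qmat) (Ot::qmat) (ns::nat list).
     L \<ge> 1 \<and> (\<forall>n\<in>{1..L}. unitary2 (U n)) \<and> hermitian2 Ot \<and> unitary2 Ot \<and>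
     length ns = k \<and> window_string L ns \<and>
     ns ! (i - 2) = ns ! (i - 1) \<and> ns ! (i - 1) = ns ! i
     \<longrightarrow> ctrl_tensor U Ot mu ns = msc c (ctrl_tensor U Ot (del2 i mu) (del2 i ns))"
proof -
  define p where "p = i - 2"
  define E where "E = (\<lambda>j. 0 < j \<and> mu!(j-1))"
  define c where "c = 1 + sgn2 (E p) * sgn2 (E (p+1)) + sgn2 (E p) * sgn2 (E (p+2)) + sgn2 (E (p+1)) * sgn2 (E (p+2))"
  have i_eq: "i = p + 2" using assms(2) p_def by simp
  show ?thesis
  proof (rule exI[of _ c], intro allI impI, elim conjE)
    fix L U Ot ns
    assume unit: "\<forall>n\<in>{1..L}. unitary2 (U n)" and uO: "unitary2 Ot" and len: "length ns = k"
      and ws: "window_string L ns" and st1: "ns ! (i - 2) = ns ! (i - 1)" and st2: "ns ! (i - 1) = ns ! i"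
    define A where "A = (\<lambda>j. htil U (ns!j))"
    define B where "B = (\<lambda>j. hbar U Ot (ns!j))"
    define mu' where "mu' = del2 i mu"
    define ns' where "ns' = del2 i ns"
    define E' where "E' = (\<lambda>j. 0 < j \<and> mu'!(j-1))"
    define A' where "A' = (\<lambda>j. htil U (ns'!j))"
    define B' where "B' = (\<lambda>j. hbar U Ot (ns'!j))"
    have len': "length ns' = k - 2" unfolding ns'_def using len assms by (simp add: del2_length)
    have lhs: "ctrl_tensor U Ot mu ns = tg E A B k"
      unfolding ct_tg E_def A_def B_def len ..
    have rhs: "ctrl_tensor U Ot mu' ns' = tg E' A' B' (k-2)"
      unfolding ct_tg E'_def A'_def B'_def len' ..
    have ns_lo: "ns'!j = ns!j" if "j < p" for j
      unfolding ns'_def using that assms len p_def by (intro del2_nth_lo) auto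
    have ns_hi: "ns'!j = ns!(j+2)" if "p \<le> j" "j < k - 2" for j
      unfolding ns'_def using that assms len p_def by (intro del2_nth_hi) auto
    have mu_lo: "mu'!j = mu!j" if "j < p" for j
      unfolding mu'_def using that assms p_def by (intro del2_nth_lo) auto
    have mu_hi: "mu'!j = mu!(j+2)" if "p \<le> j" "j < k - 3" for j
      unfolding mu'_def using that assms p_def by (intro del2_nth_hi) auto
    have E_lo: "E' j = E j" if "j \<le> p" for j
      using that mu_lo unfolding E_def E'_def by (cases j) auto
    have E_hi: "E' j = E (j+2)" if "p + 1 \<le> j" "j < k - 2" for j
      using that mu_hi[of "j-1"] unfolding E_def E'_def by auto
    have AB_hi: "A' j = A (j+2) \<and> B' j = B (j+2)" if "p \<le> j" "j < k - 2" for j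
      using ns_hi[OF that] unfolding A_def A'_def B_def B'_def by simp
    have Ap: "A (Suc p) = A p" "A (Suc (Suc p)) = A p" "B (Suc p) = B p" "B (Suc (Suc p)) = B p"
      using st1 st2 i_eq unfolding A_def B_def by (simp_all add: numeral_2_eq_2)
    have pk: "p + 3 \<le> k" using assms i_eq by simp
    have inr: "ns!p \<in> {1..L}" using ws pk len unfolding window_string_def by auto
    have AA: "A p ** A p = mat 1" unfolding A_def using htil_sq unit inr by blast
    have BB: "B p ** B p = mat 1" unfolding B_def using hbar_sq unit inr uO by blast
    have lo: "tg E A B p = tg E' A' B' p"
      by (rule tg_cong) (use E_lo ns_lo in \<open>auto simp: A_def A'_def B_def B'_def\<close>)
    have base: "tg E A B (p+3) = msc c (tg E' A' B' (p+1))"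
    proof -
      have "tg E A B (p+3) = msc c (tg E A B p ** A p + msc (sgn2 (E p)) (B p ** tg E A B p))"
        using three[OF AA BB, of "tg E A B p" "E p" "E (p+1)" "E (p+2)"]
        by (simp add: Let_def tg_Suc' Ap c_def numeral_3_eq_3)
      also have "\<dots> = msc c (tg E' A' B' (p+1))"
        using lo E_lo[of p] AB_hi[of p] Ap pk by (simp add: tg_Suc')
      finally show ?thesis .
    qed
    have ind: "p + 1 + m \<le> k - 2 \<Longrightarrow> tg E A B (p+3+m) = msc c (tg E' A' B' (p+1+m))" for m
    proof (induction m)
      case 0 then show ?case using base by simp
    next
      case (Suc m)
      then have IH: "tg E A B (p+3+m) = msc c (tg E' A' B' (p+1+m))" by simp
      have e: "E' (p+1+m) = E (p+3+m)" using E_hi[of "p+1+m"] Suc.prems by (simp add: numeral_3_eq_3)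
      have ab: "A' (p+1+m) = A (p+3+m)" "B' (p+1+m) = B (p+3+m)" using AB_hi[of "p+1+m"] Suc.prems by (simp_all add: numeral_3_eq_3)
      have s1: "tg E A B (p+3+Suc m) = tg E A B (p+3+m) ** A (p+3+m) + msc (sgn2 (E (p+3+m))) (B (p+3+m) ** tg E A B (p+3+m))"
        by (simp only: add_Suc_right tg_Suc')
      have s2: "tg E' A' B' (p+1+Suc m) = tg E' A' B' (p+1+m) ** A' (p+1+m) + msc (sgn2 (E' (p+1+m))) (B' (p+1+m) ** tg E' A' B' (p+1+m))"
        by (simp only: add_Suc_right tg_Suc')
      show ?case
        unfolding s1 s2 IH e ab by (simp add: msc_add mult.commute)
    qed
    have "tg E A B k = msc c (tg E' A' B' (k-2))"
    proof -
      obtain m where km: "k = p + 3 + m" using pk le_Suc_ex by blast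
      have "k - 2 = p + 1 + m" using km by simp
      then show ?thesis using ind[of m] km by simp
    qed
    then show "ctrl_tensor U Ot mu ns = msc c (ctrl_tensor U Ot (del2 i mu) (del2 i ns))"
      using lhs rhs mu'_def ns'_def by simp
  qed
qed

end
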